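(* Let $\lambda>1$, $\mu>0$, $\nu>0$ with $\mu\varrho(\lambda)\le\nu$. Then $0<S_{\mu,\nu,\lambda}\le C$ for a constant $C$ depending only on $\lambda$ and $\nu$.
   Context: Let $\Pi=\{x=(x_1,x_2)\in\mathbb R^2: x_2>0\}$, and for $x=(x_1,x_2)$ write $\bar x=(x_1,-x_2)$. Let $G(x,y)=\frac{1}{2\pi}K_0(|x-y|)$ be the fundamental solution of $-\Delta+\mathrm{Id}$ on $\mathbb R^2$ ($K_0$ the modified Bessel function of the second kind of order zero). Set $G_\Pi(x,y)=G(x,y)-G(\bar x,y)$ for $x,y\in\Pi$, $\mathcal G\omega(x)=\int_\Pi G_\Pi(x,y)\omega(y)\,dy$, $E(\omega)=\frac12\int_\Pi\omega\,\mathcal G\omega\,dx$ and $I(\omega)=\int_\Pi x_2\omega\,dx$. Variational problem: for $\lambda>1,\mu>0,\nu>0$ let $\mathcal A_{\mu,\nu}=\{\omega\in L^2(\Pi):\omega\ge0,\ \int_\Pi x_2\omega\,dx=\mu,\ \int_\Pi\omega\,dx\le\nu\}$, $\mathcal E_\lambda(\omega)=E(\omega)-\frac1{2\lambda}\int_\Pi\omega^2\,dx$, $S_{\mu,\nu,\lambda}=\sup_{\omega\in\mathcal A_{\mu,\nu}}\mathcal E_\lambda(\omega)$, and $\Sigma_{\mu,\nu,\lambda}=\{\omega\in\mathcal A_{\mu,\nu}:\mathcal E_\lambda(\omega)=S_{\mu,\nu,\lambda}\}$. Lamb dipole: for $\lambda>1$ let $a=a(\lambda)$ be the smallest positive solution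 of $$a\Big(\frac{K_1'(a)}{K_1(a)}+\frac{1}{(\lambda-1)^{1/2}}\cdot\frac{J_1'((\lambda-1)^{1/2}a)}{J_1((\lambda-1)^{1/2}a)}\Big)=\frac{\lambda}{\lambda-1},$$ where $J_1$ is the Bessel function of the first kind of order one and $K_1$ the modified Bessel function of the second kind of order one (such a smallest positive solution exists). For $W>0$, in polar coordinates $x=(r\cos\theta,r\sin\theta)$, define $$\Psi_L^{\lambda,W}(x)=\begin{cases}\big(A_LJ_1((\lambda-1)^{1/2}r)+\frac{W\lambda}{\lambda-1}r\big)\sin\theta,& r\le a,\\ \frac{Wa}{K_1(a)}K_1(r)\sin\theta,& r>a,\end{cases}\qquad A_L=-\frac{Wa}{(\lambda-1)J_1((\lambda-1)^{1/2}a)},$$ and $\omega_L^{\lambda,W}=\lambda(\Psi_L^{\lambda,W}-Wx_2)_+$ on $\Pi$. Finally $\varrho(\lambda)=\frac{1}{I(\omega_L^{\lambda,1})}\int_\Pi\omega_L^{\lambda,1}\,dx$. *)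

theory Defs
  imports "HOL-Analysis.Analysis"
begin

definition half_plane :: "(real \<times> real) set" where
  "half_plane = {x. snd x > 0}"

definition reflect :: "real \<times> real \<Rightarrow> real \<times> real" where
  "reflect x = (fst x, - snd x)"

definition besselJ1 :: "real \<Rightarrow> real" where
  "besselJ1 x = (\<Sum>m. (-1)^m / (fact m * fact (m + 1)) * (x / 2) ^ (2 * m + 1))"

definition besselK0 :: "real \<Rightarrow> real" where
  "besselK0 r = (\<integral>t\<in>{0<..}. exp (- r * cosh t) \<partial>lborel)"

definition besselK1 :: "real \<Rightarrow> real" where
  "besselK1 r = (\<integral>t\<in>{0<..}. exp (- r * cosh t) * cosh t \<partial>lborel)"

definition green :: "real \<times> real \<Rightarrow> real \<times> real \<Rightarrow> real" where
  "green x y = besselK0 (dist x y) / (2 * pi)"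

definition green_half :: "real \<times> real \<Rightarrow> real \<times> real \<Rightarrow> real" where
  "green_half x y = green x y - green (reflect x) y"

definition stream_op :: "(real \<times> real \<Rightarrow> real) \<Rightarrow> real \<times> real \<Rightarrow> real" where
  "stream_op \<omega> x = (\<integral>y\<in>half_plane. green_half x y * \<omega> y \<partial>lborel)"

definition energy :: "(real \<times> real \<Rightarrow> real) \<Rightarrow> real" where
  "energy \<omega> = 1 / 2 * (\<integral>x\<in>half_plane. \<omega> x * stream_op \<omega> x \<partial>lborel)"

definition impulse :: "(real \<times> real \<Rightarrow> real) \<Rightarrow> real" where
  "impulse \<omega> = (\<integral>x\<in>half_plane. snd x * \<omega> x \<partial>lborel)"

definition admissible :: "real \<Rightarrow> real \<Rightarrow> (real \<times> real \<Rightarrow> real) set" where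
  "admissible \<mu> \<nu> = {\<omega>. \<omega> \<in> borel_measurable lborel
      \<and> set_integrable lborel half_plane (\<lambda>x. (\<omega> x)\<^sup>2)
      \<and> (\<forall>x\<in>half_plane. \<omega> x \<ge> 0)
      \<and> set_integrable lborel half_plane (\<lambda>x. snd x * \<omega> x)
      \<and> impulse \<omega> = \<mu>
      \<and> set_integrable lborel half_plane \<omega>
      \<and> (\<integral>x\<in>half_plane. \<omega> x \<partial>lborel) \<le> \<nu>}"

definition penalized_energy :: "real \<Rightarrow> (real \<times> real \<Rightarrow> real) \<Rightarrow> real" where
  "penalized_energy lam \<omega> = energy \<omega> - 1 / (2 * lam) * (\<integral>x\<in>half_plane. (\<omega> x)\<^sup>2 \<partial>lborel)"

definition S_sup :: "real \<Rightarrow> real \<Rightarrow> real \<Rightarrow> ereal" where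
  "S_sup \<mu> \<nu> lam = (SUP \<omega>\<in>admissible \<mu> \<nu>. ereal (penalized_energy lam \<omega>))"

definition lamb_eq :: "real \<Rightarrow> real \<Rightarrow> bool" where
  "lamb_eq lam a \<longleftrightarrow> besselK1 a \<noteq> 0 \<and> besselJ1 (sqrt (lam - 1) * a) \<noteq> 0 \<and>
     a * (deriv besselK1 a / besselK1 a
          + 1 / sqrt (lam - 1) * (deriv besselJ1 (sqrt (lam - 1) * a) / besselJ1 (sqrt (lam - 1) * a)))
       = lam / (lam - 1)"

definition lamb_a :: "real \<Rightarrow> real" where
  "lamb_a lam = (THE a. 0 < a \<and> lamb_eq lam a \<and> (\<forall>b. 0 < b \<and> b < a \<longrightarrow> \<not> lamb_eq lam b))"

definition lamb_A :: "real \<Rightarrow> real \<Rightarrow> real" where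
  "lamb_A lam W = - (W * lamb_a lam) / ((lam - 1) * besselJ1 (sqrt (lam - 1) * lamb_a lam))"

text \<open>sin theta = x2 / r (value 0 at the origin, where Psi vanishes anyway).\<close>

definition lamb_Psi :: "real \<Rightarrow> real \<Rightarrow> real \<times> real \<Rightarrow> real" where
  "lamb_Psi lam W x = (let r = norm x; a = lamb_a lam; s = snd x / r in
     if r \<le> a then (lamb_A lam W * besselJ1 (sqrt (lam - 1) * r) + W * lam / (lam - 1) * r) * s
     else W * a / besselK1 a * besselK1 r * s)"

definition lamb_omega :: "real \<Rightarrow> real \<Rightarrow> real \<times> real \<Rightarrow> real" where
  "lamb_omega lam W x = lam * max 0 (lamb_Psi lam W x - W * snd x)"

definition rho :: "real \<Rightarrow> real" where
  "rho lam = (\<integral>x\<in>half_plane. lamb_omega lam 1 x \<partial>lborel) / impulse (lamb_omega lam 1)"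

end

theory Submission
  imports Defs "HOL-Real_Asymp.Real_Asymp"
begin


lemma cosh_ge_half: "(1 + t) / 2 \<le> cosh (t::real)"
proof -
  have "1 + t \<le> exp t" by (rule exp_ge_add_one_self)
  moreover have "0 \<le> exp (-t)" by simp
  ultimately have "2 + t * 2 \<le> exp t * 2 + exp (- t) * 2" by linarith
  then show ?thesis unfolding cosh_def by (simp add: field_simps)
qed

lemma nn_exp_lin:
  fixes a :: real assumes a: "a > 0"
  shows "(\<integral>\<^sup>+t. ennreal (exp (- a * (1 + t))) * indicator {0..} t \<partial>lborel) = ennreal (exp (-a) / a)"
proof -
  have "(\<integral>\<^sup>+t. ennreal (exp (- a * (1 + t))) * indicator {0..} t \<partial>lborel)
      = ennreal (0 - (- exp (- a * (1 + 0)) / a))"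
  proof (rule nn_integral_FTC_atLeast[where F = "\<lambda>t. - exp (- a * (1 + t)) / a"])
    show "(\<lambda>x. exp (- a * (1 + x))) \<in> borel_measurable borel" by measurable
    show "\<And>x. 0 \<le> x \<Longrightarrow> ((\<lambda>t. - exp (- a * (1 + t)) / a) has_real_derivative exp (- a * (1 + x))) (at x)"
      using a by (auto intro!: derivative_eq_intros simp: field_simps)
    show "\<And>x. 0 \<le> x \<Longrightarrow> 0 \<le> exp (- a * (1 + x))" by simp
    show "((\<lambda>t. - exp (- a * (1 + t)) / a) \<longlongrightarrow> 0) at_top"
      using a by real_asymp
  qed
  then show ?thesis by simp
qed

lemma cosh_meas[measurable]: "(cosh :: real \<Rightarrow> real) \<in> borel_measurable borel"
  by (intro borel_measurable_continuous_onI continuous_intros)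

lemma K0_fin:
  fixes r :: real assumes r: "r > 0"
  shows "(\<integral>\<^sup>+t. ennreal (indicator {0<..} t * exp (- r * cosh t)) \<partial>lborel) < \<infinity>"
proof -
  have "(\<integral>\<^sup>+t. ennreal (indicator {0<..} t * exp (- r * cosh t)) \<partial>lborel)
      \<le> (\<integral>\<^sup>+t. ennreal (exp (- (r/2) * (1 + t))) * indicator {0..} t \<partial>lborel)"
  proof (rule nn_integral_mono)
    fix t :: real
    show "ennreal (indicator {0<..} t * exp (- r * cosh t)) \<le> ennreal (exp (- (r/2) * (1 + t))) * indicator {0..} t"
    proof (cases "t > 0")
      case True
      have "r * ((1 + t) / 2) \<le> r * cosh t" using cosh_ge_half[of t] r by (intro mult_left_mono) auto
      then have "exp (- r * cosh t) \<le> exp (- (r/2) * (1 + t))" by simp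
      then show ?thesis using True by (simp add: indicator_def)
    qed (simp add: indicator_def)
  qed
  also have "\<dots> = ennreal (exp (-(r/2)) / (r/2))" using r by (intro nn_exp_lin) auto
  finally show ?thesis by (simp add: order_le_less_trans)
qed

lemma K0_int:
  fixes r :: real assumes r: "r > 0"
  shows "integrable lborel (\<lambda>t. indicator {0<..} t * exp (- r * cosh t))"
  by (rule integrableI_nonneg) (use K0_fin[OF r] in auto)

lemma K0_nn:
  fixes r :: real assumes r: "r > 0"
  shows "ennreal (besselK0 r) = (\<integral>\<^sup>+t. ennreal (indicator {0<..} t * exp (- r * cosh t)) \<partial>lborel)"
  unfolding besselK0_def set_lebesgue_integral_def
  by (subst nn_integral_eq_integral[OF K0_int[OF r]]) auto

lemma K0_nonneg: "besselK0 r \<ge> 0"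
  unfolding besselK0_def set_lebesgue_integral_def real_scaleR_def
  by (rule integral_nonneg_AE) (auto simp: indicator_def)

lemma K0_anti:
  fixes r d :: real assumes d: "0 < d" "d \<le> r"
  shows "besselK0 r \<le> besselK0 d"
proof -
  have "ennreal (besselK0 r) \<le> ennreal (besselK0 d)"
    unfolding K0_nn[OF d(1)] using d by (subst K0_nn) (auto intro!: nn_integral_mono mult_left_mono simp: indicator_def)
  then show ?thesis using K0_nonneg[of d] by simp
qed

lemma K0_meas[measurable]: "besselK0 \<in> borel_measurable borel"
  unfolding besselK0_def[abs_def] set_lebesgue_integral_def
  by measurable



lemma exp_layer:
  fixes c r :: real assumes c: "c > 0"
  shows "ennreal (exp (- c * r)) = (\<integral>\<^sup>+s. ennreal (c * exp (- c * s)) * indicator {r..} s \<partial>lborel)"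
proof -
  have "(\<integral>\<^sup>+s. ennreal (c * exp (- c * s)) * indicator {r..} s \<partial>lborel) = ennreal (0 - (- exp (- c * r)))"
  proof (rule nn_integral_FTC_atLeast[where F = "\<lambda>s. - exp (- c * s)"])
    show "(\<lambda>x. c * exp (- c * x)) \<in> borel_measurable borel" by measurable
    show "\<And>x. r \<le> x \<Longrightarrow> ((\<lambda>s. - exp (- c * s)) has_real_derivative c * exp (- c * x)) (at x)"
      by (auto intro!: derivative_eq_intros)
    show "\<And>x. r \<le> x \<Longrightarrow> 0 \<le> c * exp (- c * x)" using c by simp
    show "((\<lambda>s. - exp (- c * s)) \<longlongrightarrow> 0) at_top" using c by real_asymp
  qed
  then show ?thesis by simp
qed

lemma emeasure_cball2:
  fixes s :: real
  shows "emeasure lborel (cball (0::real\<times>real) s) = ennreal (pi * s^2) * indicator {0..} s"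
proof (cases "s \<ge> 0")
  case True
  then show ?thesis using emeasure_cball[OF True, of "0::real\<times>real"] by (simp add: unit_ball_vol_2 mult.commute power2_eq_square)
next
  case False
  then have "cball (0::real\<times>real) s = {}" by auto
  then show ?thesis using False by simp
qed

lemma gamma3:
  fixes c :: real assumes c: "c > 0"
  shows "(\<integral>\<^sup>+s. ennreal (c * exp (- c * s) * (pi * s^2)) * indicator {0..} s \<partial>lborel) = ennreal (2 * pi / c^2)"
proof -
  let ?F = "\<lambda>s. - pi * exp (- c * s) * (s^2 + 2 * s / c + 2 / c^2)"
  have "(\<integral>\<^sup>+s. ennreal (c * exp (- c * s) * (pi * s^2)) * indicator {0..} s \<partial>lborel) = ennreal (0 - ?F 0)"
  proof (rule nn_integral_FTC_atLeast[where F = ?F])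
    show "(\<lambda>s. c * exp (- c * s) * (pi * s^2)) \<in> borel_measurable borel" by measurable
    show "\<And>x. 0 \<le> x \<Longrightarrow> (?F has_real_derivative c * exp (- c * x) * (pi * x^2)) (at x)"
      using c by (auto intro!: derivative_eq_intros simp: field_simps power2_eq_square)
    show "\<And>x. 0 \<le> x \<Longrightarrow> 0 \<le> c * exp (- c * x) * (pi * x^2)" using c by simp
    show "(?F \<longlongrightarrow> 0) at_top" using c by real_asymp
  qed
  then show ?thesis by simp
qed

lemma exp_norm_int:
  fixes c :: real assumes c: "c > 0"
  shows "(\<integral>\<^sup>+z. ennreal (exp (- c * norm (z::real\<times>real))) \<partial>lborel) = ennreal (2 * pi / c^2)"
proof -
  have "(\<integral>\<^sup>+z. ennreal (exp (- c * norm (z::real\<times>real))) \<partial>lborel)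
      = (\<integral>\<^sup>+z. (\<integral>\<^sup>+s. ennreal (c * exp (- c * s)) * indicator (cball 0 s) (z::real\<times>real) \<partial>lborel) \<partial>lborel)"
    apply (intro nn_integral_cong)
    apply (subst exp_layer[OF c])
    apply (intro nn_integral_cong)
    by (simp add: indicator_def dist_norm)
  also have "\<dots> = (\<integral>\<^sup>+s. (\<integral>\<^sup>+z. ennreal (c * exp (- c * s)) * indicator (cball 0 s) (z::real\<times>real) \<partial>lborel) \<partial>lborel)"
  proof (rule lborel_pair.Fubini'[symmetric])
    have "Measurable.pred (borel \<Otimes>\<^sub>M borel) (\<lambda>p::(real\<times>real)\<times>real. norm (fst p) \<le> snd p)" by measurable
    then have "{(z::real\<times>real, s::real). norm z \<le> s} \<in> sets (borel \<Otimes>\<^sub>M borel)"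
      unfolding pred_def by (simp add: case_prod_beta' Collect_conv_if space_pair_measure)
    then show "case_prod (\<lambda>(z::real\<times>real) (s::real). ennreal (c * exp (- c * s)) * indicator (cball 0 s) z) \<in> borel_measurable (lborel \<Otimes>\<^sub>M lborel)"
      by (simp add: indicator_def mem_cball dist_norm) measurable?
  qed
  also have "\<dots> = (\<integral>\<^sup>+s. ennreal (c * exp (- c * s) * (pi * s^2)) * indicator {0..} s \<partial>lborel)"
  proof (intro nn_integral_cong)
    fix s :: real
    have "(\<integral>\<^sup>+z. ennreal (c * exp (- c * s)) * indicator (cball 0 s) (z::real\<times>real) \<partial>lborel)
        = ennreal (c * exp (- c * s)) * (ennreal (pi * s^2) * indicator {0..} s)"
      by (simp add: nn_integral_cmult_indicator emeasure_cball2)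
    also have "\<dots> = ennreal (c * exp (- c * s) * (pi * s^2)) * indicator {0..} s"
      using c by (simp add: ennreal_mult mult.assoc)
    finally show "(\<integral>\<^sup>+z. ennreal (c * exp (- c * s)) * indicator (cball 0 s) (z::real\<times>real) \<partial>lborel)
        = ennreal (c * exp (- c * s) * (pi * s^2)) * indicator {0..} s" .
  qed
  also have "\<dots> = ennreal (2 * pi / c^2)" by (rule gamma3[OF c])
  finally show ?thesis .
qed

lemma sech_int:
  "(\<integral>\<^sup>+t. ennreal (2 * pi / cosh t ^ 2) * indicator {0..} t \<partial>lborel) = ennreal (2 * pi)"
proof -
  have "(\<integral>\<^sup>+t. ennreal (2 * pi / cosh t ^ 2) * indicator {0..} t \<partial>lborel) = ennreal (2 * pi * 1 - 2 * pi * tanh 0)"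
  proof (rule nn_integral_FTC_atLeast[where F = "\<lambda>t. 2 * pi * tanh t"])
    show "(\<lambda>t. 2 * pi / cosh t ^ 2) \<in> borel_measurable borel" by measurable
    show "((\<lambda>t. 2 * pi * tanh t) has_real_derivative 2 * pi / cosh x ^ 2) (at x)" for x :: real
    proof -
      have c: "cosh x \<noteq> 0" using cosh_real_pos[of x] by simp
      have e: "cosh x ^ 2 - sinh x ^ 2 = 1" using cosh_square_eq[of x] by simp
      have "1 - tanh x ^ 2 = (cosh x ^ 2 - sinh x ^ 2) / cosh x ^ 2"
        using c by (simp add: tanh_def field_simps power_divide)
      then have "1 - tanh x ^ 2 = 1 / cosh x ^ 2" using e by simp
      moreover have "((\<lambda>t. 2 * pi * tanh t) has_real_derivative 2 * pi * (1 - tanh x ^ 2)) (at x)"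
        using c by (auto intro!: derivative_eq_intros)
      ultimately show ?thesis by simp
    qed
    show "0 \<le> 2 * pi / cosh x ^ 2" for x :: real by simp
    show "((\<lambda>t. 2 * pi * tanh t) \<longlongrightarrow> 2 * pi * 1) at_top"
      by (intro tendsto_mult tendsto_const tanh_real_at_top)
  qed
  then show ?thesis by simp
qed

lemma K0_total: "(\<integral>\<^sup>+z. ennreal (besselK0 (norm (z::real\<times>real))) \<partial>lborel) = ennreal (2 * pi)"
proof -
  have "(\<integral>\<^sup>+z. ennreal (besselK0 (norm (z::real\<times>real))) \<partial>lborel)
      = (\<integral>\<^sup>+z. (\<integral>\<^sup>+t. ennreal (indicator {0<..} t * exp (- norm (z::real\<times>real) * cosh t)) \<partial>lborel) \<partial>lborel)"
    by (intro nn_integral_cong_AE eventually_mono[OF AE_lborel_singleton[of 0]] K0_nn) auto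
  also have "\<dots> = (\<integral>\<^sup>+t. (\<integral>\<^sup>+z. ennreal (indicator {0<..} t * exp (- norm (z::real\<times>real) * cosh t)) \<partial>lborel) \<partial>lborel)"
    by (rule lborel_pair.Fubini'[symmetric]) measurable
  also have "\<dots> = (\<integral>\<^sup>+t. ennreal (indicator {0<..} t) * ennreal (2 * pi / cosh t ^ 2) \<partial>lborel)"
  proof (intro nn_integral_cong)
    fix t :: real
    have "(\<integral>\<^sup>+z. ennreal (indicator {0<..} t * exp (- norm (z::real\<times>real) * cosh t)) \<partial>lborel)
       = (\<integral>\<^sup>+z. ennreal (indicator {0<..} t) * ennreal (exp (- cosh t * norm (z::real\<times>real))) \<partial>lborel)"
      by (intro nn_integral_cong) (simp add: ennreal_mult mult.commute)
    also have "\<dots> = ennreal (indicator {0<..} t) * (\<integral>\<^sup>+z. ennreal (exp (- cosh t * norm (z::real\<times>real))) \<partial>lborel)"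
      by (rule nn_integral_cmult) measurable
    also have "\<dots> = ennreal (indicator {0<..} t) * ennreal (2 * pi / cosh t ^ 2)"
      using exp_norm_int[of "cosh t"] cosh_real_pos[of t] by simp
    finally show "(\<integral>\<^sup>+z. ennreal (indicator {0<..} t * exp (- norm (z::real\<times>real) * cosh t)) \<partial>lborel)
       = ennreal (indicator {0<..} t) * ennreal (2 * pi / cosh t ^ 2)" .
  qed
  also have "\<dots> = (\<integral>\<^sup>+t. ennreal (2 * pi / cosh t ^ 2) * indicator {0..} t \<partial>lborel)"
    by (intro nn_integral_cong_AE eventually_mono[OF AE_lborel_singleton[of 0]]) (auto simp: indicator_def)
  also have "\<dots> = ennreal (2 * pi)" by (rule sech_int)
  finally show ?thesis .
qed



definition Gf :: "real \<times> real \<Rightarrow> real" where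
  "Gf z = besselK0 (norm z) / (2 * pi)"

lemma Gf_nonneg: "Gf z \<ge> 0"
  unfolding Gf_def using K0_nonneg by simp

lemma Gf_meas[measurable]: "Gf \<in> borel_measurable borel"
  unfolding Gf_def[abs_def] by measurable

lemma Gf_total: "(\<integral>\<^sup>+z. ennreal (Gf z) \<partial>lborel) = 1"
proof -
  have "(\<integral>\<^sup>+z. ennreal (Gf z) \<partial>lborel) = (\<integral>\<^sup>+z. ennreal (1 / (2*pi)) * ennreal (besselK0 (norm (z::real\<times>real))) \<partial>lborel)"
    by (rule nn_integral_cong) (simp add: Gf_def ennreal_mult[symmetric] K0_nonneg)
  also have "\<dots> = ennreal (1 / (2*pi)) * ennreal (2 * pi)"
    by (subst nn_integral_cmult) (auto simp: K0_total)
  also have "\<dots> = 1" by (simp add: ennreal_mult[symmetric])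
  finally show ?thesis .
qed

lemma green_eq: "green x y = Gf (x - y)"
  unfolding green_def Gf_def by (simp add: dist_norm)

lemma Gf_minus: "Gf (- z) = Gf z"
  unfolding Gf_def by simp

lemma nn_translate_minus:
  fixes f :: "real \<times> real \<Rightarrow> ennreal" and x :: "real \<times> real"
  assumes [measurable]: "f \<in> borel_measurable borel"
  shows "(\<integral>\<^sup>+y. f (x - y) \<partial>lborel) = (\<integral>\<^sup>+z. f z \<partial>lborel)"
proof -
  have "(lborel :: (real\<times>real) measure) = density (distr lborel borel (\<lambda>y. x + (-1::real) *\<^sub>R y)) (\<lambda>_. \<bar>-1::real\<bar> ^ DIM(real\<times>real))"
    by (rule lborel_affine) simp
  then have e: "(lborel :: (real\<times>real) measure) = distr lborel borel (\<lambda>y. x - y)"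
    by (simp add: density_1)
  have "(\<integral>\<^sup>+z. f z \<partial>lborel) = (\<integral>\<^sup>+z. f z \<partial>distr lborel borel (\<lambda>y. x - y))"
    by (subst e[symmetric]) simp
  also have "\<dots> = (\<integral>\<^sup>+y. f (x - y) \<partial>lborel)"
    by (subst nn_integral_distr) auto
  finally show ?thesis ..
qed

lemma nn_translate_plus:
  fixes f :: "real \<times> real \<Rightarrow> ennreal" and c :: "real \<times> real"
  assumes [measurable]: "f \<in> borel_measurable borel"
  shows "(\<integral>\<^sup>+y. f (c + y) \<partial>lborel) = (\<integral>\<^sup>+z. f z \<partial>lborel)"
proof -
  have "(\<integral>\<^sup>+z. f z \<partial>lborel) = (\<integral>\<^sup>+z. f z \<partial>distr lborel borel ((+) c))"
    by (simp add: lborel_distr_plus)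
  also have "\<dots> = (\<integral>\<^sup>+y. f (c + y) \<partial>lborel)"
    by (subst nn_integral_distr) auto
  finally show ?thesis ..
qed

lemma ball_sets[measurable]: "ball (c::real\<times>real) r \<in> sets borel" by simp

lemma small_ball:
  fixes eps :: real assumes "eps > 0"
  shows "\<exists>d>0. (\<integral>\<^sup>+z. ennreal (Gf z) * indicator (ball 0 d) z \<partial>lborel) < ennreal eps"
proof -
  define f where "f i z = ennreal (Gf z) * indicator (ball 0 (1 / Suc i)) z" for i :: nat and z :: "real \<times> real"
  have [measurable]: "f i \<in> borel_measurable lborel" for i unfolding f_def by measurable
  have dec: "AE z in lborel. f (Suc i) z \<le> f i z" for i
  proof -
    have h: "1 / real (Suc (Suc i)) \<le> 1 / real (Suc i)" by (simp add: frac_le)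
    have sub: "ball (0::real\<times>real) (1 / real (Suc (Suc i))) \<subseteq> ball 0 (1 / real (Suc i))" by (rule subset_ball[OF h])
    show ?thesis unfolding f_def by (intro AE_I2) (use sub in \<open>auto simp: indicator_def subset_iff\<close>)
  qed
  have f0: "(\<integral>\<^sup>+z. f 0 z \<partial>lborel) < \<infinity>"
  proof -
    have "(\<integral>\<^sup>+z. f 0 z \<partial>lborel) \<le> (\<integral>\<^sup>+z. ennreal (Gf z) \<partial>lborel)"
      unfolding f_def by (intro nn_integral_mono) (auto simp: indicator_def)
    then show ?thesis by (simp add: Gf_total order_le_less_trans)
  qed
  have "(\<integral>\<^sup>+ z. (INF i. f i z) \<partial>lborel) = (INF i. integral\<^sup>N lborel (f i))"
    by (rule nn_integral_monotone_convergence_INF_AE'[OF dec _ f0]) simp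
  moreover have "(\<integral>\<^sup>+ z. (INF i. f i z) \<partial>lborel) = 0"
  proof -
    have "AE z in lborel. (INF i. f i z) = 0"
    proof (rule eventually_mono[OF AE_lborel_singleton[of 0]])
      fix z :: "real\<times>real" assume "z \<noteq> 0"
      then have "norm z > 0" by simp
      then obtain n :: nat where n: "1 / Suc n < norm z"
        by (metis nat_approx_posE of_nat_Suc)
      then have "f n z = 0" unfolding f_def by (simp add: indicator_def mem_ball)
      then have "(INF i. f i z) \<le> 0" by (metis INF_lower2 UNIV_I order_refl)
      then show "(INF i. f i z) = 0" by simp
    qed
    then show ?thesis by (simp add: nn_integral_0_iff_AE)
  qed
  ultimately have "(INF i. integral\<^sup>N lborel (f i)) < ennreal eps" using assms by simp
  then obtain i where "integral\<^sup>N lborel (f i) < ennreal eps" by (auto simp: INF_less_iff)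
  then show ?thesis unfolding f_def by (intro exI[of _ "1 / Suc i"]) auto
qed



lemma ennreal_integral_le:
  fixes f :: "'a \<Rightarrow> real"
  shows "ennreal (integral\<^sup>L M f) \<le> (\<integral>\<^sup>+x. ennreal (f x) \<partial>M)"
proof (cases "integrable M f")
  case True
  have fin: "(\<integral>\<^sup>+x. ennreal (f x) \<partial>M) < \<infinity>"
  proof -
    have "(\<integral>\<^sup>+x. ennreal (f x) \<partial>M) \<le> (\<integral>\<^sup>+x. ennreal (norm (f x)) \<partial>M)"
      by (intro nn_integral_mono) auto
    also have "\<dots> < \<infinity>" using True by (simp add: integrable_iff_bounded)
    finally show ?thesis .
  qed
  have "integral\<^sup>L M f \<le> enn2real (\<integral>\<^sup>+x. ennreal (f x) \<partial>M)"
    unfolding real_lebesgue_integral_def[OF True] by simp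
  then have "ennreal (integral\<^sup>L M f) \<le> ennreal (enn2real (\<integral>\<^sup>+x. ennreal (f x) \<partial>M))"
    by (rule ennreal_leI)
  also have "\<dots> = (\<integral>\<^sup>+x. ennreal (f x) \<partial>M)" using fin by simp
  finally show ?thesis .
next
  case False
  then show ?thesis by (simp add: not_integrable_integral_eq)
qed

definition ku :: "real \<Rightarrow> real \<times> real \<Rightarrow> ennreal" where
  "ku d z = ennreal (Gf z) * indicator (ball 0 d) z"

lemma ku_meas[measurable]: "ku d \<in> borel_measurable borel"
  unfolding ku_def[abs_def] by measurable

lemma Gf_split:
  assumes d: "d > 0"
  shows "ennreal (Gf z) \<le> ku d z + ennreal (besselK0 d / (2 * pi))"
proof (cases "z \<in> ball 0 d")
  case True
  then show ?thesis by (simp add: ku_def)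
next
  case False
  then have "d \<le> norm z" by (simp add: mem_ball)
  then have "besselK0 (norm z) \<le> besselK0 d" using K0_anti d by simp
  then have "Gf z \<le> besselK0 d / (2 * pi)" unfolding Gf_def by (simp add: divide_right_mono)
  then have "ennreal (Gf z) \<le> ennreal (besselK0 d / (2 * pi))" by (rule ennreal_leI)
  then show ?thesis by (simp add: add_increasing)
qed

lemma ku_translate1: "(\<integral>\<^sup>+y. ku d (x - y) \<partial>lborel) = (\<integral>\<^sup>+z. ku d z \<partial>lborel)"
  by (rule nn_translate_minus) measurable

lemma ku_translate2: "(\<integral>\<^sup>+x. ku d (x - y) \<partial>lborel) = (\<integral>\<^sup>+z. ku d z \<partial>lborel)"
  using nn_translate_plus[of "ku d" "- y"] by simp

lemma double_bound:
  fixes w :: "real \<times> real \<Rightarrow> real"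
  assumes wm[measurable]: "w \<in> borel_measurable borel" and wpos: "\<And>x. w x \<ge> 0" and d: "d > 0"
  shows "(\<integral>\<^sup>+x. ennreal (w x) * (\<integral>\<^sup>+y. ennreal (Gf (x - y)) * ennreal (w y) \<partial>lborel) \<partial>lborel)
    \<le> 2 * (\<integral>\<^sup>+z. ku d z \<partial>lborel) * (\<integral>\<^sup>+x. ennreal ((w x)^2) \<partial>lborel)
       + ennreal (besselK0 d / (2 * pi)) * (\<integral>\<^sup>+x. ennreal (w x) \<partial>lborel)^2"
proof -
  define M where "M = ennreal (besselK0 d / (2 * pi))"
  define K where "K = (\<integral>\<^sup>+z. ku d z \<partial>lborel)"
  define I2 where "I2 = (\<integral>\<^sup>+x. ennreal ((w x)^2) \<partial>lborel)"
  define I1 where "I1 = (\<integral>\<^sup>+x. ennreal (w x) \<partial>lborel)"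
  have amgm: "ennreal (w x) * ennreal (w y) \<le> ennreal ((w x)^2) + ennreal ((w y)^2)" for x y
  proof -
    have "w x * w y \<le> (w x)^2 + (w y)^2"
    proof -
      have "0 \<le> (w x - w y)^2" by simp
      moreover have "0 \<le> w x * w y" using wpos[of x] wpos[of y] by simp
      ultimately show ?thesis by (simp add: power2_diff)
    qed
    then have "ennreal (w x * w y) \<le> ennreal ((w x)^2 + (w y)^2)" by (rule ennreal_leI)
    then show ?thesis using wpos[of x] wpos[of y] by (simp add: ennreal_mult ennreal_plus)
  qed
  have "(\<integral>\<^sup>+x. ennreal (w x) * (\<integral>\<^sup>+y. ennreal (Gf (x - y)) * ennreal (w y) \<partial>lborel) \<partial>lborel)
      = (\<integral>\<^sup>+x. (\<integral>\<^sup>+y. ennreal (w x) * (ennreal (Gf (x - y)) * ennreal (w y)) \<partial>lborel) \<partial>lborel)"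
    by (intro nn_integral_cong nn_integral_cmult[symmetric]) measurable
  also have "\<dots> \<le> (\<integral>\<^sup>+x. (\<integral>\<^sup>+y. (ennreal ((w x)^2) * ku d (x - y) + ennreal ((w y)^2) * ku d (x - y))
                     + ennreal (w x) * (M * ennreal (w y)) \<partial>lborel) \<partial>lborel)"
  proof (intro nn_integral_mono)
    fix x y :: "real \<times> real"
    have "ennreal (w x) * (ennreal (Gf (x - y)) * ennreal (w y))
        \<le> ennreal (w x) * ((ku d (x - y) + M) * ennreal (w y))"
      using Gf_split[OF d, of "x - y"] unfolding M_def by (intro mult_left_mono mult_right_mono) auto
    also have "\<dots> = (ennreal (w x) * ennreal (w y)) * ku d (x - y) + ennreal (w x) * (M * ennreal (w y))"
      by (simp add: algebra_simps)
    also have "\<dots> \<le> (ennreal ((w x)^2) + ennreal ((w y)^2)) * ku d (x - y) + ennreal (w x) * (M * ennreal (w y))"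
      using amgm[of x y] by (intro add_right_mono mult_right_mono) auto
    also have "\<dots> = (ennreal ((w x)^2) * ku d (x - y) + ennreal ((w y)^2) * ku d (x - y)) + ennreal (w x) * (M * ennreal (w y))"
      by (simp add: algebra_simps)
    finally show "ennreal (w x) * (ennreal (Gf (x - y)) * ennreal (w y))
        \<le> (ennreal ((w x)^2) * ku d (x - y) + ennreal ((w y)^2) * ku d (x - y)) + ennreal (w x) * (M * ennreal (w y))" .
  qed
  also have "\<dots> = (\<integral>\<^sup>+x. (\<integral>\<^sup>+y. ennreal ((w x)^2) * ku d (x - y) \<partial>lborel) \<partial>lborel)
      + (\<integral>\<^sup>+x. (\<integral>\<^sup>+y. ennreal ((w y)^2) * ku d (x - y) \<partial>lborel) \<partial>lborel)
      + (\<integral>\<^sup>+x. (\<integral>\<^sup>+y. ennreal (w x) * (M * ennreal (w y)) \<partial>lborel) \<partial>lborel)"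
    by (simp add: nn_integral_add M_def)
  also have "(\<integral>\<^sup>+x. (\<integral>\<^sup>+y. ennreal ((w x)^2) * ku d (x - y) \<partial>lborel) \<partial>lborel) = K * I2"
  proof -
    have "(\<integral>\<^sup>+x. (\<integral>\<^sup>+y. ennreal ((w x)^2) * ku d (x - y) \<partial>lborel) \<partial>lborel)
        = (\<integral>\<^sup>+x. ennreal ((w x)^2) * K \<partial>lborel)"
      by (intro nn_integral_cong) (simp add: nn_integral_cmult ku_translate1 K_def)
    also have "\<dots> = I2 * K" unfolding I2_def by (rule nn_integral_multc) measurable
    also have "\<dots> = K * I2" by (simp add: mult.commute)
    finally show ?thesis .
  qed
  also have "(\<integral>\<^sup>+x. (\<integral>\<^sup>+y. ennreal ((w y)^2) * ku d (x - y) \<partial>lborel) \<partial>lborel) = K * I2"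
  proof -
    have "(\<integral>\<^sup>+x. (\<integral>\<^sup>+y. ennreal ((w y)^2) * ku d (x - y) \<partial>lborel) \<partial>lborel)
        = (\<integral>\<^sup>+y. (\<integral>\<^sup>+x. ennreal ((w y)^2) * ku d (x - y) \<partial>lborel) \<partial>lborel)"
      by (rule lborel_pair.Fubini'[symmetric]) measurable
    also have "\<dots> = (\<integral>\<^sup>+y. ennreal ((w y)^2) * K \<partial>lborel)"
      by (intro nn_integral_cong) (simp add: nn_integral_cmult ku_translate2 K_def)
    also have "\<dots> = I2 * K" unfolding I2_def by (rule nn_integral_multc) measurable
    also have "\<dots> = K * I2" by (simp add: mult.commute)
    finally show ?thesis .
  qed
  also have "(\<integral>\<^sup>+x. (\<integral>\<^sup>+y. ennreal (w x) * (M * ennreal (w y)) \<partial>lborel) \<partial>lborel) = M * I1^2"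
  proof -
    have "(\<integral>\<^sup>+x. (\<integral>\<^sup>+y. ennreal (w x) * (M * ennreal (w y)) \<partial>lborel) \<partial>lborel)
        = (\<integral>\<^sup>+x. ennreal (w x) * (M * I1) \<partial>lborel)"
      by (intro nn_integral_cong) (simp add: nn_integral_cmult I1_def)
    also have "\<dots> = I1 * (M * I1)" unfolding I1_def by (rule nn_integral_multc) measurable
    also have "\<dots> = M * I1^2" by (simp add: power2_eq_square mult.commute mult.left_commute)
    finally show ?thesis .
  qed
  also have "K * I2 + K * I2 + M * I1^2 = 2 * K * I2 + M * I1^2"
    by (simp add: mult_2 distrib_right)
  finally show ?thesis unfolding K_def I2_def I1_def M_def .
qed



lemma half_plane_sets[measurable]: "half_plane \<in> sets borel"
proof -
  have "open half_plane" unfolding half_plane_def by (intro open_Collect_less continuous_intros)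
  then show ?thesis by (rule borel_open)
qed

lemma ennreal_mult_le: "(a::real) \<ge> 0 \<Longrightarrow> ennreal (a * b) \<le> ennreal a * ennreal b"
  by (cases "b \<ge> 0") (auto simp: ennreal_mult mult_nonneg_nonpos ennreal_neg)

lemma green_half_le: "green_half x y \<le> Gf (x - y)"
  unfolding green_half_def using green_eq[of x y] green_eq[of "reflect x" y] Gf_nonneg[of "reflect x - y"]
  by simp

lemma stream_bound:
  assumes om: "\<omega> \<in> borel_measurable lborel" and pos: "\<forall>x\<in>half_plane. \<omega> x \<ge> 0"
  shows "ennreal (stream_op \<omega> x) \<le> (\<integral>\<^sup>+y. ennreal (Gf (x - y)) * ennreal (indicator half_plane y * \<omega> y) \<partial>lborel)"
proof -
  have "ennreal (stream_op \<omega> x) \<le> (\<integral>\<^sup>+y. ennreal (indicator half_plane y * (green_half x y * \<omega> y)) \<partial>lborel)"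
    unfolding stream_op_def set_lebesgue_integral_def real_scaleR_def by (rule ennreal_integral_le)
  also have "\<dots> \<le> (\<integral>\<^sup>+y. ennreal (Gf (x - y)) * ennreal (indicator half_plane y * \<omega> y) \<partial>lborel)"
  proof (intro nn_integral_mono)
    fix y :: "real \<times> real"
    show "ennreal (indicator half_plane y * (green_half x y * \<omega> y)) \<le> ennreal (Gf (x - y)) * ennreal (indicator half_plane y * \<omega> y)"
    proof (cases "y \<in> half_plane")
      case True
      then have "\<omega> y \<ge> 0" using pos by auto
      then have "green_half x y * \<omega> y \<le> Gf (x - y) * \<omega> y" using green_half_le by (intro mult_right_mono) auto
      then have "ennreal (green_half x y * \<omega> y) \<le> ennreal (Gf (x - y) * \<omega> y)" by (rule ennreal_leI)
      then show ?thesis using True \<open>\<omega> y \<ge> 0\<close> Gf_nonneg by (simp add: ennreal_mult)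
    qed simp
  qed
  finally show ?thesis .
qed

lemma upper_bound:
  assumes lam: "lam > 1" and nu: "nu > 0"
  shows "\<exists>C. \<forall>mu \<omega>. \<omega> \<in> admissible mu nu \<longrightarrow> penalized_energy lam \<omega> \<le> C"
proof -
  obtain d where d: "d > 0" and dK: "(\<integral>\<^sup>+z. ennreal (Gf z) * indicator (ball 0 d) z \<partial>lborel) < ennreal (1 / (2 * lam))"
    using small_ball[of "1 / (2 * lam)"] lam by auto
  define M where "M = besselK0 d / (2 * pi)"
  have M0: "M \<ge> 0" unfolding M_def using K0_nonneg by simp
  have K: "(\<integral>\<^sup>+z. ku d z \<partial>lborel) \<le> ennreal (1 / (2 * lam))"
    using dK unfolding ku_def by simp
  show ?thesis
  proof (intro exI[of _ "M * nu^2 / 2"] allI impI)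
    fix mu \<omega> assume adm: "\<omega> \<in> admissible mu nu"
    have om[measurable]: "\<omega> \<in> borel_measurable borel" using adm unfolding admissible_def by auto
    have pos: "\<forall>x\<in>half_plane. \<omega> x \<ge> 0" using adm unfolding admissible_def by auto
    have int2: "integrable lborel (\<lambda>x. indicator half_plane x * (\<omega> x)^2)"
      using adm unfolding admissible_def set_integrable_def by auto
    have int1: "integrable lborel (\<lambda>x. indicator half_plane x * \<omega> x)"
      using adm unfolding admissible_def set_integrable_def by auto
    define L2 where "L2 = (\<integral>x\<in>half_plane. (\<omega> x)^2 \<partial>lborel)"
    define m where "m = (\<integral>x\<in>half_plane. \<omega> x \<partial>lborel)"
    have mnu: "m \<le> nu" using adm unfolding admissible_def m_def by auto
    define w where "w x = indicator half_plane x * \<omega> x" for x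
    have wm[measurable]: "w \<in> borel_measurable borel" unfolding w_def[abs_def] by measurable
    have wpos: "w x \<ge> 0" for x using pos unfolding w_def by (auto simp: indicator_def)
    have m0: "m \<ge> 0" unfolding m_def set_lebesgue_integral_def
      using pos by (intro integral_nonneg_AE) (auto simp: indicator_def)
    have L20: "L2 \<ge> 0" unfolding L2_def set_lebesgue_integral_def
      by (intro integral_nonneg_AE) (auto simp: indicator_def)
    have I2: "(\<integral>\<^sup>+x. ennreal ((w x)^2) \<partial>lborel) = ennreal L2"
    proof -
      have "(\<integral>\<^sup>+x. ennreal ((w x)^2) \<partial>lborel) = (\<integral>\<^sup>+x. ennreal (indicator half_plane x * (\<omega> x)^2) \<partial>lborel)"
        by (intro nn_integral_cong) (simp add: w_def indicator_def)
      also have "\<dots> = ennreal L2" unfolding L2_def set_lebesgue_integral_def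
        by (subst nn_integral_eq_integral[OF int2]) auto
      finally show ?thesis .
    qed
    have I1: "(\<integral>\<^sup>+x. ennreal (w x) \<partial>lborel) = ennreal m"
      unfolding m_def set_lebesgue_integral_def w_def real_scaleR_def
      by (subst nn_integral_eq_integral[OF int1]) (use pos in \<open>auto simp: indicator_def\<close>)
    define I where "I = integral\<^sup>L lborel (\<lambda>x. indicator half_plane x *\<^sub>R (\<omega> x * stream_op \<omega> x))"
    have en: "energy \<omega> = I / 2" unfolding energy_def I_def set_lebesgue_integral_def by simp
    have "ennreal I \<le> (\<integral>\<^sup>+x. ennreal (indicator half_plane x *\<^sub>R (\<omega> x * stream_op \<omega> x)) \<partial>lborel)"
      unfolding I_def by (rule ennreal_integral_le)
    also have "\<dots> \<le> (\<integral>\<^sup>+x. ennreal (w x) * (\<integral>\<^sup>+y. ennreal (Gf (x - y)) * ennreal (w y) \<partial>lborel) \<partial>lborel)"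
    proof (intro nn_integral_mono)
      fix x :: "real \<times> real"
      have "ennreal (indicator half_plane x *\<^sub>R (\<omega> x * stream_op \<omega> x)) = ennreal (w x * stream_op \<omega> x)"
        by (simp add: w_def mult.assoc)
      also have "\<dots> \<le> ennreal (w x) * ennreal (stream_op \<omega> x)" by (rule ennreal_mult_le[OF wpos])
      also have "\<dots> \<le> ennreal (w x) * (\<integral>\<^sup>+y. ennreal (Gf (x - y)) * ennreal (w y) \<partial>lborel)"
        using stream_bound[OF _ pos, of x] unfolding w_def by (intro mult_left_mono) auto
      finally show "ennreal (indicator half_plane x *\<^sub>R (\<omega> x * stream_op \<omega> x))
          \<le> ennreal (w x) * (\<integral>\<^sup>+y. ennreal (Gf (x - y)) * ennreal (w y) \<partial>lborel)" .
    qed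
    also have "\<dots> \<le> 2 * (\<integral>\<^sup>+z. ku d z \<partial>lborel) * (\<integral>\<^sup>+x. ennreal ((w x)^2) \<partial>lborel)
       + ennreal M * (\<integral>\<^sup>+x. ennreal (w x) \<partial>lborel)^2"
      unfolding M_def by (rule double_bound[OF wm wpos d])
    also have "\<dots> \<le> 2 * ennreal (1 / (2 * lam)) * ennreal L2 + ennreal M * (ennreal m)^2"
    proof -
      have "2 * (\<integral>\<^sup>+z. ku d z \<partial>lborel) \<le> 2 * ennreal (1 / (2 * lam))"
        using K by (rule mult_left_mono) simp
      then have "2 * (\<integral>\<^sup>+z. ku d z \<partial>lborel) * ennreal L2 \<le> 2 * ennreal (1 / (2 * lam)) * ennreal L2"
        by (rule mult_right_mono) simp
      then show ?thesis unfolding I1 I2 by (rule add_right_mono)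
    qed
    also have "\<dots> = ennreal (L2 / lam + M * m^2)"
    proof -
      have a: "2 * ennreal (1 / (2 * lam)) * ennreal L2 = ennreal (L2 / lam)"
      proof -
        have "2 * ennreal (1 / (2 * lam)) = ennreal (2 * (1 / (2 * lam)))"
          using lam by (subst ennreal_mult) auto
        also have "2 * (1 / (2 * lam)) = 1 / lam" using lam by simp
        finally have "2 * ennreal (1 / (2 * lam)) * ennreal L2 = ennreal (1 / lam) * ennreal L2" by simp
        also have "\<dots> = ennreal (1 / lam * L2)" using lam L20 by (subst ennreal_mult) auto
        finally show ?thesis by simp
      qed
      have b: "ennreal M * (ennreal m)^2 = ennreal (M * m^2)"
        using M0 m0 by (simp add: ennreal_mult ennreal_power)
      show ?thesis unfolding a b using L20 lam M0 by (subst ennreal_plus) auto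
    qed
    finally have "ennreal I \<le> ennreal (L2 / lam + M * m^2)" .
    then have "I \<le> L2 / lam + M * m^2"
      using lam L20 M0 m0 by (subst (asm) ennreal_le_iff) auto
    moreover have "m^2 \<le> nu^2" using m0 mnu by (intro power_mono) auto
    then have "M * m^2 \<le> M * nu^2" using M0 by (rule mult_left_mono)
    ultimately have "I \<le> L2 / lam + M * nu^2" by linarith
    then show "penalized_energy lam \<omega> \<le> M * nu^2 / 2"
      unfolding penalized_energy_def en L2_def[symmetric] using lam by (simp add: field_simps)
  qed
qed



lemma tail_small:
  fixes eps :: real assumes "eps > 0"
  shows "\<exists>r>0. (\<integral>\<^sup>+z. ennreal (Gf z) * indicator (- ball 0 r) z \<partial>lborel) < ennreal eps"
proof -
  define f where "f i z = ennreal (Gf z) * indicator (- ball 0 (Suc i)) z" for i :: nat and z :: "real \<times> real"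
  have [measurable]: "f i \<in> borel_measurable lborel" for i unfolding f_def by measurable
  have dec: "AE z in lborel. f (Suc i) z \<le> f i z" for i
  proof -
    have sub: "- ball (0::real\<times>real) (real (Suc (Suc i))) \<subseteq> - ball 0 (real (Suc i))"
      using subset_ball[of "real (Suc i)" "real (Suc (Suc i))" "0::real\<times>real"] by auto
    show ?thesis unfolding f_def by (intro AE_I2) (use sub in \<open>auto simp: indicator_def subset_iff\<close>)
  qed
  have f0: "(\<integral>\<^sup>+z. f 0 z \<partial>lborel) < \<infinity>"
  proof -
    have "(\<integral>\<^sup>+z. f 0 z \<partial>lborel) \<le> (\<integral>\<^sup>+z. ennreal (Gf z) \<partial>lborel)"
      unfolding f_def by (intro nn_integral_mono) (auto simp: indicator_def)
    then show ?thesis by (simp add: Gf_total order_le_less_trans)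
  qed
  have "(\<integral>\<^sup>+ z. (INF i. f i z) \<partial>lborel) = (INF i. integral\<^sup>N lborel (f i))"
    by (rule nn_integral_monotone_convergence_INF_AE'[OF dec _ f0]) simp
  moreover have "(\<integral>\<^sup>+ z. (INF i. f i z) \<partial>lborel) = 0"
  proof -
    have "(INF i. f i z) = 0" for z
    proof -
      obtain n :: nat where n: "norm z < n" using reals_Archimedean2 by blast
      then have "f n z = 0" unfolding f_def by (simp add: indicator_def mem_ball)
      then have "(INF i. f i z) \<le> 0" by (metis INF_lower2 UNIV_I order_refl)
      then show "(INF i. f i z) = 0" by simp
    qed
    then show ?thesis by simp
  qed
  ultimately have "(INF i. integral\<^sup>N lborel (f i)) < ennreal eps" using assms by simp
  then obtain i where "integral\<^sup>N lborel (f i) < ennreal eps" by (auto simp: INF_less_iff)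
  then show ?thesis unfolding f_def by (intro exI[of _ "real (Suc i)"]) auto
qed

lemma ball_tail_split:
  "(\<integral>\<^sup>+z. ku r z \<partial>lborel) + (\<integral>\<^sup>+z. ennreal (Gf z) * indicator (- ball 0 r) z \<partial>lborel) = 1"
proof -
  have "(\<integral>\<^sup>+z. ku r z \<partial>lborel) + (\<integral>\<^sup>+z. ennreal (Gf z) * indicator (- ball 0 r) z \<partial>lborel)
      = (\<integral>\<^sup>+z. ku r z + ennreal (Gf z) * indicator (- ball 0 r) z \<partial>lborel)"
    by (rule nn_integral_add[symmetric]) (measurable; fail)+
  also have "\<dots> = (\<integral>\<^sup>+z. ennreal (Gf z) \<partial>lborel)"
    by (intro nn_integral_cong) (auto simp: ku_def indicator_def)
  finally show ?thesis by (simp add: Gf_total)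
qed

lemma nn_prod:
  fixes f g :: "real \<Rightarrow> ennreal"
  assumes [measurable]: "f \<in> borel_measurable borel" "g \<in> borel_measurable borel"
  shows "(\<integral>\<^sup>+x. f (fst x) * g (snd x) \<partial>lborel) = (\<integral>\<^sup>+a. f a \<partial>lborel) * (\<integral>\<^sup>+b. g b \<partial>lborel)"
proof -
  have "(\<integral>\<^sup>+x. f (fst x) * g (snd x) \<partial>(lborel::(real\<times>real) measure))
      = (\<integral>\<^sup>+x. f (fst x) * g (snd x) \<partial>(lborel \<Otimes>\<^sub>M lborel))"
    by (simp add: lborel_prod)
  also have "\<dots> = (\<integral>\<^sup>+a. (\<integral>\<^sup>+b. f a * g b \<partial>lborel) \<partial>lborel)"
    by (subst lborel.nn_integral_fst[symmetric]) auto
  also have "\<dots> = (\<integral>\<^sup>+a. f a * (\<integral>\<^sup>+b. g b \<partial>lborel) \<partial>lborel)"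
    by (intro nn_integral_cong nn_integral_cmult) simp
  also have "\<dots> = (\<integral>\<^sup>+a. f a \<partial>lborel) * (\<integral>\<^sup>+b. g b \<partial>lborel)"
    by (rule nn_integral_multc) simp
  finally show ?thesis .
qed

lemma box_nn:
  fixes a b c d :: real assumes "a \<le> b" "c \<le> d"
  shows "(\<integral>\<^sup>+x. indicator ({a..b} \<times> {c..d}) x \<partial>lborel) = ennreal ((b - a) * (d - c))"
proof -
  have "(\<integral>\<^sup>+x. indicator ({a..b} \<times> {c..d}) x \<partial>lborel)
      = (\<integral>\<^sup>+x. indicator {a..b} (fst x) * indicator {c..d} (snd x) \<partial>(lborel::(real\<times>real) measure))"
    by (intro nn_integral_cong) (auto simp: indicator_def)
  also have "\<dots> = ennreal ((b - a) * (d - c))"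
    using assms by (subst nn_prod) (auto simp: ennreal_mult)
  finally show ?thesis .
qed

lemma box_snd_nn:
  fixes a b c d :: real assumes "a \<le> b" "0 \<le> c" "c \<le> d"
  shows "(\<integral>\<^sup>+x. ennreal (snd x) * indicator ({a..b} \<times> {c..d}) x \<partial>lborel) = ennreal ((b - a) * ((d^2 - c^2) / 2))"
proof -
  have "(\<integral>\<^sup>+x. ennreal (snd x) * indicator ({a..b} \<times> {c..d}) x \<partial>lborel)
      = (\<integral>\<^sup>+x. indicator {a..b} (fst x) * (ennreal (snd x) * indicator {c..d} (snd x)) \<partial>(lborel::(real\<times>real) measure))"
    by (intro nn_integral_cong) (auto simp: indicator_def)
  also have "\<dots> = ennreal (b - a) * (\<integral>\<^sup>+t. ennreal t * indicator {c..d} t \<partial>lborel)"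
    using assms by (subst nn_prod) auto
  also have "(\<integral>\<^sup>+t. ennreal t * indicator {c..d} t \<partial>lborel) = ennreal (d^2/2 - c^2/2)"
    using assms by (subst nn_integral_FTC_Icc[where F = "\<lambda>t. t^2/2"]) (auto intro!: derivative_eq_intros)
  finally show ?thesis using assms by (simp add: ennreal_mult[symmetric] diff_divide_distrib)
qed

lemma conv_nn_le1:
  assumes [measurable]: "S \<in> sets borel"
  shows "(\<integral>\<^sup>+y. ennreal (indicator S y * Gf (p - y)) \<partial>lborel) \<le> 1"
proof -
  have "(\<integral>\<^sup>+y. ennreal (indicator S y * Gf (p - y)) \<partial>lborel) \<le> (\<integral>\<^sup>+y. ennreal (Gf (p - y)) \<partial>lborel)"
    using Gf_nonneg by (intro nn_integral_mono) (auto simp: indicator_def)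
  also have "\<dots> = (\<integral>\<^sup>+z. ennreal (Gf z) \<partial>lborel)"
    by (rule nn_translate_minus[where f = "\<lambda>z. ennreal (Gf z)"]) measurable
  finally show ?thesis by (simp add: Gf_total)
qed

lemma conv_int:
  assumes [measurable]: "S \<in> sets borel"
  shows "integrable lborel (\<lambda>y. indicator S y * Gf (p - y))"
proof (rule integrableI_nonneg)
  show "AE x in lborel. 0 \<le> indicator S x * Gf (p - x)" using Gf_nonneg by auto
  have "(\<integral>\<^sup>+y. ennreal (indicator S y * Gf (p - y)) \<partial>lborel) \<le> 1" by (rule conv_nn_le1[OF assms])
  then show "(\<integral>\<^sup>+y. ennreal (indicator S y * Gf (p - y)) \<partial>lborel) < \<infinity>"
    unfolding infinity_ennreal_def by (rule order_le_less_trans[OF _ ennreal_one_less_top])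
qed measurable

lemma conv_eq:
  assumes [measurable]: "S \<in> sets borel"
  shows "ennreal (integral\<^sup>L lborel (\<lambda>y. indicator S y * Gf (p - y))) = (\<integral>\<^sup>+y. ennreal (indicator S y * Gf (p - y)) \<partial>lborel)"
  using Gf_nonneg by (subst nn_integral_eq_integral[OF conv_int[OF assms]]) auto

lemma conv_bounds:
  assumes [measurable]: "S \<in> sets borel"
  shows "0 \<le> integral\<^sup>L lborel (\<lambda>y. indicator S y * Gf (p - y))"
    and "integral\<^sup>L lborel (\<lambda>y. indicator S y * Gf (p - y)) \<le> 1"
proof -
  show "0 \<le> integral\<^sup>L lborel (\<lambda>y. indicator S y * Gf (p - y))"
    using Gf_nonneg by (intro integral_nonneg_AE) auto
  have "ennreal (integral\<^sup>L lborel (\<lambda>y. indicator S y * Gf (p - y))) \<le> ennreal 1"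
    using conv_nn_le1[OF assms, of p] by (simp add: conv_eq[OF assms])
  then show "integral\<^sup>L lborel (\<lambda>y. indicator S y * Gf (p - y)) \<le> 1" by (simp add: ennreal_le_iff)
qed

lemma conv_lower:
  assumes [measurable]: "S \<in> sets borel" and sub: "ball p r \<subseteq> S"
  shows "enn2real (\<integral>\<^sup>+z. ku r z \<partial>lborel) \<le> integral\<^sup>L lborel (\<lambda>y. indicator S y * Gf (p - y))"
proof -
  have "(\<integral>\<^sup>+z. ku r z \<partial>lborel) = (\<integral>\<^sup>+y. ku r (p - y) \<partial>lborel)" by (rule ku_translate1[symmetric])
  also have "\<dots> \<le> (\<integral>\<^sup>+y. ennreal (indicator S y * Gf (p - y)) \<partial>lborel)"
  proof (intro nn_integral_mono)
    fix y :: "real \<times> real"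
    show "ku r (p - y) \<le> ennreal (indicator S y * Gf (p - y))"
    proof (cases "p - y \<in> ball 0 r")
      case True
      then have "y \<in> ball p r" by (simp add: mem_ball dist_norm norm_minus_commute)
      then have "y \<in> S" using sub by auto
      then show ?thesis by (simp add: ku_def indicator_def)
    qed (simp add: ku_def)
  qed
  also have "\<dots> = ennreal (integral\<^sup>L lborel (\<lambda>y. indicator S y * Gf (p - y)))" by (rule conv_eq[OF assms(1), symmetric])
  finally have "(\<integral>\<^sup>+z. ku r z \<partial>lborel) \<le> ennreal (integral\<^sup>L lborel (\<lambda>y. indicator S y * Gf (p - y)))" .
  then have "enn2real (\<integral>\<^sup>+z. ku r z \<partial>lborel) \<le> enn2real (ennreal (integral\<^sup>L lborel (\<lambda>y. indicator S y * Gf (p - y))))"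
    by (rule enn2real_mono) simp
  then show ?thesis using conv_bounds(1)[OF assms(1), of p] by simp
qed

lemma conv_upper:
  assumes [measurable]: "S \<in> sets borel" and far: "\<And>y. y \<in> S \<Longrightarrow> r \<le> norm (p - y)"
  shows "integral\<^sup>L lborel (\<lambda>y. indicator S y * Gf (p - y)) \<le> enn2real (\<integral>\<^sup>+z. ennreal (Gf z) * indicator (- ball 0 r) z \<partial>lborel)"
proof -
  have fin: "(\<integral>\<^sup>+z. ennreal (Gf z) * indicator (- ball 0 r) z \<partial>lborel) < top"
  proof -
    have "(\<integral>\<^sup>+z. ennreal (Gf z) * indicator (- ball 0 r) z \<partial>lborel)
        \<le> (\<integral>\<^sup>+z. ku r z \<partial>lborel) + (\<integral>\<^sup>+z. ennreal (Gf z) * indicator (- ball 0 r) z \<partial>lborel)"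
      by (rule add_increasing[OF zero_le order_refl])
    then show ?thesis unfolding ball_tail_split by (rule order_le_less_trans[OF _ ennreal_one_less_top])
  qed
  have "ennreal (integral\<^sup>L lborel (\<lambda>y. indicator S y * Gf (p - y))) = (\<integral>\<^sup>+y. ennreal (indicator S y * Gf (p - y)) \<partial>lborel)"
    by (rule conv_eq[OF assms(1)])
  also have "\<dots> \<le> (\<integral>\<^sup>+y. ennreal (Gf (p - y)) * indicator (- ball 0 r) (p - y) \<partial>lborel)"
  proof (intro nn_integral_mono)
    fix y :: "real \<times> real"
    show "ennreal (indicator S y * Gf (p - y)) \<le> ennreal (Gf (p - y)) * indicator (- ball 0 r) (p - y)"
    proof (cases "y \<in> S")
      case True
      then have "p - y \<in> - ball 0 r" using far[OF True] by (simp add: mem_ball)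
      then show ?thesis using True by simp
    qed simp
  qed
  also have "\<dots> = (\<integral>\<^sup>+z. ennreal (Gf z) * indicator (- ball 0 r) z \<partial>lborel)"
    by (rule nn_translate_minus[where f = "\<lambda>z. ennreal (Gf z) * indicator (- ball 0 r) z"]) measurable
  finally have e: "ennreal (integral\<^sup>L lborel (\<lambda>y. indicator S y * Gf (p - y))) \<le> (\<integral>\<^sup>+z. ennreal (Gf z) * indicator (- ball 0 r) z \<partial>lborel)" .
  have "enn2real (ennreal (integral\<^sup>L lborel (\<lambda>y. indicator S y * Gf (p - y)))) \<le> enn2real (\<integral>\<^sup>+z. ennreal (Gf z) * indicator (- ball 0 r) z \<partial>lborel)"
    by (rule enn2real_mono[OF e fin])
  then show ?thesis using conv_bounds(1)[OF assms(1), of p] by simp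
qed



lemma snd_meas[measurable]: "(snd :: real\<times>real \<Rightarrow> real) \<in> borel_measurable borel"
  by (intro borel_measurable_continuous_onI continuous_intros)

lemma reflect_meas[measurable]: "reflect \<in> borel_measurable borel"
  unfolding reflect_def[abs_def] by (intro borel_measurable_continuous_onI continuous_intros)

lemma abs_fst_le: "\<bar>fst z\<bar> \<le> norm (z::real\<times>real)"
  by (metis norm_fst_le prod.collapse real_norm_def)

lemma abs_snd_le: "\<bar>snd z\<bar> \<le> norm (z::real\<times>real)"
  by (metis norm_snd_le prod.collapse real_norm_def)

lemma box_sets[measurable]: "({a..b} \<times> {c..d} :: (real\<times>real) set) \<in> sets borel"
  by (intro borel_closed closed_Times closed_atLeastAtMost)

lemma box_measure:
  fixes a b c d :: real assumes "a \<le> b" "c \<le> d"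
  shows "emeasure lborel ({a..b} \<times> {c..d}) = ennreal ((b - a) * (d - c))"
    and "measure lborel ({a..b} \<times> {c..d}) = (b - a) * (d - c)"
    and "integral\<^sup>L lborel (indicator ({a..b} \<times> {c..d}) :: real\<times>real \<Rightarrow> real) = (b - a) * (d - c)"
proof -
  show e: "emeasure lborel ({a..b} \<times> {c..d}) = ennreal ((b - a) * (d - c))"
    using box_nn[OF assms] by (simp add: nn_integral_indicator)
  then show m: "measure lborel ({a..b} \<times> {c..d}) = (b - a) * (d - c)"
    using assms by (simp add: measure_def)
  then show "integral\<^sup>L lborel (indicator ({a..b} \<times> {c..d}) :: real\<times>real \<Rightarrow> real) = (b - a) * (d - c)"
    by simp
qed

lemma box_int:
  fixes a b c d :: real assumes "a \<le> b" "c \<le> d"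
  shows "integrable lborel (indicator ({a..b} \<times> {c..d}) :: real\<times>real \<Rightarrow> real)"
  using box_measure(1)[OF assms] by (intro integrable_real_indicator) auto

lemma box_bounded_int:
  fixes a b c d :: real and f :: "real\<times>real \<Rightarrow> real"
  assumes "a \<le> b" "c \<le> d" and [measurable]: "f \<in> borel_measurable borel" and fb: "\<And>x. \<bar>f x\<bar> \<le> 1"
  shows "integrable lborel (\<lambda>x. indicator ({a..b} \<times> {c..d}) x * f x)"
proof (rule Bochner_Integration.integrable_bound[OF box_int[OF assms(1,2)]])
  show "(\<lambda>x. indicator ({a..b} \<times> {c..d}) x * f x) \<in> borel_measurable lborel" by measurable
  show "AE x in lborel. norm (indicator ({a..b} \<times> {c..d}) x * f x) \<le> norm (indicator ({a..b} \<times> {c..d}) x :: real)"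
    using fb by (intro AE_I2) (auto simp: indicator_def)
qed

lemma lower_bound:
  fixes lam nu mu :: real
  assumes lam: "lam > 1" and nu: "nu > 0" and mu: "mu > 0"
  shows "\<exists>\<omega>\<in>admissible mu nu. 0 < penalized_energy lam \<omega>"
proof -
  define eta where "eta = (1 - 1 / lam) / 4"
  have il: "0 < 1 / lam" "1 / lam < 1" using lam by auto
  have eta0: "eta > 0" and eta1: "eta < 1/4"
    using il unfolding eta_def by auto
  have eta_lam: "1 - 4 * eta = 1 / lam" unfolding eta_def by (simp add: field_simps)
  obtain r where r0: "r > 0" and tl: "(\<integral>\<^sup>+z. ennreal (Gf z) * indicator (- ball 0 r) z \<partial>lborel) < ennreal eta"
    using tail_small[OF eta0] by auto
  define Ir where "Ir = enn2real (\<integral>\<^sup>+z. ku r z \<partial>lborel)"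
  define Tr where "Tr = enn2real (\<integral>\<^sup>+z. ennreal (Gf z) * indicator (- ball 0 r) z \<partial>lborel)"
  have sp: "(\<integral>\<^sup>+z. ku r z \<partial>lborel) + (\<integral>\<^sup>+z. ennreal (Gf z) * indicator (- ball 0 r) z \<partial>lborel) = 1"
    by (rule ball_tail_split)
  have Kfin: "(\<integral>\<^sup>+z. ku r z \<partial>lborel) < top"
  proof -
    have "(\<integral>\<^sup>+z. ku r z \<partial>lborel) \<le> 1" unfolding sp[symmetric] by (rule add_increasing2[OF zero_le order_refl])
    then show ?thesis by (rule order_le_less_trans[OF _ ennreal_one_less_top])
  qed
  have Tfin: "(\<integral>\<^sup>+z. ennreal (Gf z) * indicator (- ball 0 r) z \<partial>lborel) < top"
    using tl by (rule order_less_trans) simp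
  have IrE: "(\<integral>\<^sup>+z. ku r z \<partial>lborel) = ennreal Ir" unfolding Ir_def using Kfin by simp
  have TrE: "(\<integral>\<^sup>+z. ennreal (Gf z) * indicator (- ball 0 r) z \<partial>lborel) = ennreal Tr" unfolding Tr_def using Tfin by simp
  have Ir0: "Ir \<ge> 0" and Tr0: "Tr \<ge> 0" unfolding Ir_def Tr_def by auto
  have "ennreal (Ir + Tr) = ennreal 1" using sp unfolding IrE TrE using Ir0 Tr0 by (simp add: ennreal_plus)
  then have IrTr: "Ir + Tr = 1" using Ir0 Tr0 by (subst (asm) ennreal_inj) auto
  have Treta: "Tr < eta" using tl unfolding TrE ennreal_less_iff[OF Tr0] .
  define R where "R = 2 * r / eta"
  define h where "h = R + r + mu / nu"
  have R0: "R > 0" unfolding R_def using r0 eta0 by simp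
  have rR: "r = R * eta / 2" unfolding R_def using eta0 by simp
  have Rreq: "R - r = R * (1 - eta / 2)" using rR by (simp add: algebra_simps)
  have Rr: "R - r > 0" unfolding Rreq using R0 eta1 by (intro mult_pos_pos) auto
  have muh: "mu / nu \<le> h - R - r" unfolding h_def by simp
  have hR: "h - R \<ge> r" using muh mu nu by (smt (verit) divide_pos_pos)
  have h0: "h > 0" using hR R0 r0 by simp
  have mass: "mu / h \<le> nu"
  proof -
    have "mu / nu \<le> h" using muh R0 r0 by simp
    then have "mu \<le> h * nu" using nu by (simp add: divide_le_eq)
    then show ?thesis using h0 by (simp add: divide_le_eq mult.commute)
  qed
  define Q where "Q = {-R..R} \<times> {h-R..h+R}"
  define Q' where "Q' = {-(R-r)..R-r} \<times> {h-R+r..h+R-r}"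
  have Qs[measurable]: "Q \<in> sets borel" and Q's[measurable]: "Q' \<in> sets borel" unfolding Q_def Q'_def by measurable
  have QP: "Q \<subseteq> half_plane" unfolding Q_def half_plane_def using hR r0 by auto
  have Q'Q: "Q' \<subseteq> Q" unfolding Q_def Q'_def using r0 by auto
  have mQ: "integral\<^sup>L lborel (indicator Q :: real\<times>real \<Rightarrow> real) = 4 * R^2"
    unfolding Q_def using R0 by (subst box_measure(3)) (auto simp: power2_eq_square)
  have mQ': "integral\<^sup>L lborel (indicator Q' :: real\<times>real \<Rightarrow> real) = 4 * (R - r)^2"
    unfolding Q'_def using Rr by (subst box_measure(3)) (auto simp: power2_eq_square algebra_simps)
  have iQ: "integrable lborel (indicator Q :: real\<times>real \<Rightarrow> real)"
    unfolding Q_def using R0 by (intro box_int) auto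
  have iQ': "integrable lborel (indicator Q' :: real\<times>real \<Rightarrow> real)"
    unfolding Q'_def using Rr by (intro box_int) auto
  define c where "c = mu / (4 * R^2 * h)"
  have c0: "c > 0" unfolding c_def using mu R0 h0 by simp
  define \<omega> where "\<omega> x = c * indicator Q x" for x :: "real \<times> real"
  have PQ: "indicator half_plane x * indicator Q x = (indicator Q x :: real)" for x
    using QP by (auto simp: indicator_def)
  have SQnn: "(\<integral>\<^sup>+x. ennreal (snd x * indicator Q x) \<partial>lborel) = ennreal (4 * R^2 * h)"
  proof -
    have "(\<integral>\<^sup>+x. ennreal (snd x * indicator Q x) \<partial>lborel) = (\<integral>\<^sup>+x. ennreal (snd x) * indicator Q x \<partial>lborel)"
      by (intro nn_integral_cong) (auto simp: indicator_def)
    also have "\<dots> = ennreal ((R - - R) * (((h + R)^2 - (h - R)^2) / 2))"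
      unfolding Q_def using R0 hR r0 by (intro box_snd_nn) auto
    also have "(R - - R) * (((h + R)^2 - (h - R)^2) / 2) = 4 * R^2 * h"
      by (simp add: power2_eq_square algebra_simps)
    finally show ?thesis .
  qed
  have SQpos: "0 \<le> snd x * indicator Q x" for x
    using hR r0 by (auto simp: indicator_def Q_def)
  have SQint: "integrable lborel (\<lambda>x. snd x * indicator Q x)"
    by (rule integrableI_nonneg) (use SQpos SQnn in \<open>auto intro: borel_measurable_times\<close>)
  have SQval: "integral\<^sup>L lborel (\<lambda>x. snd x * indicator Q x) = 4 * R^2 * h"
  proof -
    have "ennreal (integral\<^sup>L lborel (\<lambda>x. snd x * indicator Q x)) = ennreal (4 * R^2 * h)"
      using SQpos by (subst nn_integral_eq_integral[OF SQint, symmetric]) (auto simp: SQnn)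
    then show ?thesis using h0 R0 SQpos by (subst (asm) ennreal_inj) (auto intro: integral_nonneg_AE)
  qed
  have f2: "(\<lambda>x. indicator half_plane x *\<^sub>R (\<omega> x)^2) = (\<lambda>x. c^2 * indicator Q x)"
    using QP by (intro ext) (auto simp: \<omega>_def indicator_def power2_eq_square)
  have f3: "(\<lambda>x. indicator half_plane x *\<^sub>R (snd x * \<omega> x)) = (\<lambda>x. c * (snd x * indicator Q x))"
    using QP by (intro ext) (auto simp: \<omega>_def indicator_def)
  have f1: "(\<lambda>x. indicator half_plane x *\<^sub>R \<omega> x) = (\<lambda>x. c * indicator Q x)"
    using QP by (intro ext) (auto simp: \<omega>_def indicator_def)
  have adm: "\<omega> \<in> admissible mu nu"
    unfolding admissible_def
  proof (intro CollectI conjI)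
    show "\<omega> \<in> borel_measurable lborel" unfolding \<omega>_def by measurable
    show "set_integrable lborel half_plane (\<lambda>x. (\<omega> x)\<^sup>2)"
      unfolding set_integrable_def f2 using iQ by simp
    show "\<forall>x\<in>half_plane. 0 \<le> \<omega> x" using c0 by (auto simp: \<omega>_def)
    show "set_integrable lborel half_plane (\<lambda>x. snd x * \<omega> x)"
      unfolding set_integrable_def f3 using SQint by simp
    show "impulse \<omega> = mu"
      unfolding impulse_def set_lebesgue_integral_def f3 using SQval c0 R0 h0
      by (simp add: c_def)
    show "set_integrable lborel half_plane \<omega>"
      unfolding set_integrable_def f1 using iQ by simp
    have "(\<integral>x\<in>half_plane. \<omega> x \<partial>lborel) = mu / h"
      unfolding set_lebesgue_integral_def f1 using mQ c0 R0 h0 by (simp add: c_def)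
    then show "(\<integral>x\<in>half_plane. \<omega> x \<partial>lborel) \<le> nu" using mass by simp
  qed
  define A where "A x = integral\<^sup>L lborel (\<lambda>y. indicator Q y * Gf (x - y))" for x
  define B where "B x = integral\<^sup>L lborel (\<lambda>y. indicator Q y * Gf (reflect x - y))" for x
  have Am[measurable]: "A \<in> borel_measurable borel" unfolding A_def[abs_def] by measurable
  have Bm[measurable]: "B \<in> borel_measurable borel" unfolding B_def[abs_def] by measurable
  have Ab: "\<bar>A x\<bar> \<le> 1" "0 \<le> A x" for x unfolding A_def using conv_bounds[OF Qs, of x] by auto
  have Bb: "\<bar>B x\<bar> \<le> 1" "0 \<le> B x" for x unfolding B_def using conv_bounds[OF Qs, of "reflect x"] by auto
  have st: "stream_op \<omega> x = c * A x - c * B x" for x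
  proof -
    have "(\<lambda>y. indicator half_plane y *\<^sub>R (green_half x y * \<omega> y))
        = (\<lambda>y. c * (indicator Q y * Gf (x - y)) - c * (indicator Q y * Gf (reflect x - y)))"
      using QP by (intro ext) (auto simp: \<omega>_def indicator_def green_half_def green_eq algebra_simps)
    then show ?thesis unfolding stream_op_def set_lebesgue_integral_def A_def B_def
      using conv_int[OF Qs, of x] conv_int[OF Qs, of "reflect x"] by simp
  qed
  have iQA: "integrable lborel (\<lambda>x. indicator Q x * A x)"
    unfolding Q_def using R0 Ab(1) by (intro box_bounded_int) auto
  have iQB: "integrable lborel (\<lambda>x. indicator Q x * B x)"
    unfolding Q_def using R0 Bb(1) by (intro box_bounded_int) auto
  define SA where "SA = integral\<^sup>L lborel (\<lambda>x. indicator Q x * A x)"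
  define SB where "SB = integral\<^sup>L lborel (\<lambda>x. indicator Q x * B x)"
  have en: "energy \<omega> = c^2 / 2 * (SA - SB)"
  proof -
    have "(\<lambda>x. indicator half_plane x *\<^sub>R (\<omega> x * stream_op \<omega> x))
        = (\<lambda>x. c^2 * (indicator Q x * A x) - c^2 * (indicator Q x * B x))"
      using QP by (intro ext) (auto simp: \<omega>_def indicator_def st power2_eq_square algebra_simps)
    moreover have "integral\<^sup>L lborel (\<lambda>x. c^2 * (indicator Q x * A x) - c^2 * (indicator Q x * B x)) = c^2 * SA - c^2 * SB"
      unfolding SA_def SB_def
      by (subst Bochner_Integration.integral_diff) (use iQA iQB in auto)
    ultimately show ?thesis unfolding energy_def set_lebesgue_integral_def
      by (simp add: algebra_simps)
  qed
  have L2: "(\<integral>x\<in>half_plane. (\<omega> x)^2 \<partial>lborel) = c^2 * (4 * R^2)"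
    unfolding set_lebesgue_integral_def f2 using mQ by simp
  have SAb: "Ir * (4 * (R - r)^2) \<le> SA"
  proof -
    have "integral\<^sup>L lborel (\<lambda>x. Ir * indicator Q' x) \<le> SA"
      unfolding SA_def
    proof (rule integral_mono)
      show "integrable lborel (\<lambda>x. Ir * indicator Q' x)" using iQ' by simp
      show "integrable lborel (\<lambda>x. indicator Q x * A x)" by (rule iQA)
      fix x :: "real \<times> real"
      show "Ir * indicator Q' x \<le> indicator Q x * A x"
      proof (cases "x \<in> Q'")
        case True
        then have xQ: "x \<in> Q" using Q'Q by auto
        have "ball x r \<subseteq> Q"
        proof
          fix y assume "y \<in> ball x r"
          then have n: "norm (x - y) < r" by (simp add: mem_ball dist_norm)
          have "\<bar>fst x - fst y\<bar> < r" using abs_fst_le[of "x - y"] n by simp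
          moreover have "\<bar>snd x - snd y\<bar> < r" using abs_snd_le[of "x - y"] n by simp
          ultimately show "y \<in> Q" using True unfolding Q_def Q'_def by (auto simp: mem_Times_iff abs_less_iff)
        qed
        then have "Ir \<le> A x" unfolding Ir_def A_def by (rule conv_lower[OF Qs])
        then show ?thesis using True xQ by simp
      qed (use Ab in \<open>auto simp: indicator_def\<close>)
    qed
    then show ?thesis using mQ' by simp
  qed
  have SBb: "SB \<le> Tr * (4 * R^2)"
  proof -
    have "SB \<le> integral\<^sup>L lborel (\<lambda>x. Tr * indicator Q x)"
      unfolding SB_def
    proof (rule integral_mono)
      show "integrable lborel (\<lambda>x. Tr * indicator Q x)" using iQ by simp
      show "integrable lborel (\<lambda>x. indicator Q x * B x)" by (rule iQB)
      fix x :: "real \<times> real"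
      show "indicator Q x * B x \<le> Tr * indicator Q x"
      proof (cases "x \<in> Q")
        case True
        have "B x \<le> Tr" unfolding B_def Tr_def
        proof (rule conv_upper[OF Qs])
          fix y assume yQ: "y \<in> Q"
          have "snd x \<ge> h - R" "snd y \<ge> h - R" using True yQ unfolding Q_def by auto
          then have "r \<le> \<bar>snd (reflect x - y)\<bar>" using hR r0 by (simp add: reflect_def)
          then show "r \<le> norm (reflect x - y)" using abs_snd_le[of "reflect x - y"] by linarith
        qed
        then show ?thesis using True by simp
      qed simp
    qed
    then show ?thesis using mQ by simp
  qed
  have pen: "0 < penalized_energy lam \<omega>"
  proof -
    have k1: "(1 - eta/2)^2 \<ge> 1 - eta" by (simp add: power2_eq_square algebra_simps)
    have Ir1: "Ir = 1 - Tr" using IrTr by simp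
    have k2: "Ir * (1 - eta/2)^2 \<ge> (1 - Tr) * (1 - eta)"
      unfolding Ir1 using k1 Treta eta1 by (intro mult_left_mono) auto
    have k3a: "Tr * (2 - eta) < eta * (2 - eta)" using Treta eta1 by (intro mult_strict_right_mono) auto
    have k3b: "eta * (2 - eta) \<le> 2 * eta" using eta0 by (simp add: algebra_simps)
    have k3: "(1 - Tr) * (1 - eta) - Tr > 1 - 4 * eta"
    proof -
      have "(1 - Tr) * (1 - eta) - Tr = 1 - eta - Tr * (2 - eta)" by (simp add: algebra_simps)
      then show ?thesis using k3a k3b eta0 by linarith
    qed
    have k4: "Ir * (1 - eta/2)^2 - Tr > 1 / lam" using k2 k3 eta_lam by linarith
    have "4 * R^2 * (Ir * (1 - eta/2)^2 - Tr) > 4 * R^2 * (1 / lam)"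
      using k4 R0 by (intro mult_strict_left_mono) auto
    then have m1: "4 * R^2 * (Ir * (1 - eta/2)^2) - 4 * R^2 * Tr > 4 * R^2 / lam"
      by (simp add: right_diff_distrib)
    have e: "Ir * (4 * (R - r)^2) = 4 * R^2 * (Ir * (1 - eta/2)^2)"
      unfolding Rreq by (simp add: power_mult_distrib)
    have SBb': "SB \<le> 4 * R^2 * Tr" using SBb by (simp add: mult.commute)
    have "SA - SB > 4 * R^2 / lam" using m1 e SAb SBb' by linarith
    then have "c^2 / 2 * (SA - SB) > c^2 / 2 * (4 * R^2 / lam)"
      using c0 by (intro mult_strict_left_mono) auto
    then show ?thesis unfolding penalized_energy_def en L2 by (simp add: field_simps)
  qed
  show ?thesis using adm pen by blast
qed



theorem lemma3p5:
  fixes lam nu :: real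
  assumes "lam > 1" and "nu > 0"
  shows "\<exists>C::real. \<forall>mu>0. mu * rho lam \<le> nu \<longrightarrow>
           0 < S_sup mu nu lam \<and> S_sup mu nu lam \<le> ereal C"
proof -
  obtain C where C: "\<forall>mu \<omega>. \<omega> \<in> admissible mu nu \<longrightarrow> penalized_energy lam \<omega> \<le> C"
    using upper_bound[OF assms] by blast
  show ?thesis
  proof (intro exI[of _ C] allI impI conjI)
    fix mu :: real assume mu: "mu > 0"
    obtain \<omega> where om: "\<omega> \<in> admissible mu nu" and p: "0 < penalized_energy lam \<omega>"
      using lower_bound[OF assms mu] by blast
    have "ereal (penalized_energy lam \<omega>) \<le> S_sup mu nu lam"
      unfolding S_sup_def by (rule SUP_upper[OF om])
    moreover have "(0::ereal) < ereal (penalized_energy lam \<omega>)" using p by simp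
    ultimately show "0 < S_sup mu nu lam" by (rule order_less_le_trans[rotated])
    show "S_sup mu nu lam \<le> ereal C"
      unfolding S_sup_def by (rule SUP_least) (use C in auto)
  qed
qed


end
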